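(* Let $D=\{(x,y)\in\mathbb{R}^2 \mid x+y\neq 1\}$ and $f(x,y)=(x+y)e^{-x}$. The 3-web on $D$ formed by the three foliations whose leaves are the level curves $x=\text{const}$, $y=\text{const}$ and $f(x,y)=\text{const}$ is linearizable: near every point of $D$ there is a local diffeomorphism onto an open subset of $\mathbb{R}^2$ carrying the leaves of all three foliations onto (open pieces of) straight lines.
   Context: A 3-web on a 2-dimensional manifold is given by three foliations by smooth curves in general position (pairwise transversal). A 3-web is linear if all three foliations consist of straight lines; it is linearizable if it is locally equivalent to a linear web via a local diffeomorphism. *)

theory Defs
  imports "HOL-Analysis.Analysis"
begin

text \<open>A real function h on an open set S is C-infinity iff it belongs to some family F
  of functions, each of which is differentiable at every point of S with both
  partial derivatives again in F (the greatest such family is the set of smooth functions).\<close>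

definition smooth_on :: "(real \<times> real) set \<Rightarrow> (real \<times> real \<Rightarrow> real) \<Rightarrow> bool" where
  "smooth_on S g \<longleftrightarrow>
     (\<exists>F. g \<in> F \<and>
       (\<forall>h\<in>F. continuous_on S h \<and>
          (\<exists>a\<in>F. \<exists>b\<in>F. \<forall>p\<in>S.
             (h has_derivative (\<lambda>(u, v). a p * u + b p * v)) (at p))))"

definition smooth_map_on :: "(real \<times> real) set \<Rightarrow> (real \<times> real \<Rightarrow> real \<times> real) \<Rightarrow> bool" where
  "smooth_map_on S \<phi> \<longleftrightarrow> smooth_on S (\<lambda>p. fst (\<phi> p)) \<and> smooth_on S (\<lambda>p. snd (\<phi> p))"

definition diffeo_onto_open :: "(real \<times> real) set \<Rightarrow> (real \<times> real \<Rightarrow> real \<times> real) \<Rightarrow> bool" where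
  "diffeo_onto_open U \<phi> \<longleftrightarrow>
     open U \<and> open (\<phi> ` U) \<and> inj_on \<phi> U \<and> smooth_map_on U \<phi> \<and>
     (\<exists>\<psi>. smooth_map_on (\<phi> ` U) \<psi> \<and> (\<forall>p\<in>U. \<psi> (\<phi> p) = p))"

definition line :: "real \<times> real \<Rightarrow> real \<times> real \<Rightarrow> (real \<times> real) set" where
  "line a v = {a + t *\<^sub>R v | t. True}"

definition local_leaf :: "(real \<times> real) set \<Rightarrow> (real \<times> real \<Rightarrow> real) \<Rightarrow> real \<times> real \<Rightarrow> (real \<times> real) set" where
  "local_leaf U g q = connected_component_set {r \<in> U. g r = g q} q"

definition linearizable_web ::
  "(real \<times> real) set \<Rightarrow> (real \<times> real \<Rightarrow> real) \<Rightarrow> (real \<times> real \<Rightarrow> real) \<Rightarrow> (real \<times> real \<Rightarrow> real) \<Rightarrow> bool" where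
  "linearizable_web D g1 g2 g3 \<longleftrightarrow>
     (\<forall>p\<in>D. \<exists>U \<phi>. p \<in> U \<and> U \<subseteq> D \<and> diffeo_onto_open U \<phi> \<and>
        (\<forall>g\<in>{g1, g2, g3}. \<forall>q\<in>U. \<exists>a v. v \<noteq> 0 \<and> \<phi> ` local_leaf U g q \<subseteq> line a v))"

end

theory Submission
  imports Defs
begin

inductive_set ring_gen :: "(real \<times> real \<Rightarrow> real) set \<Rightarrow> (real \<times> real \<Rightarrow> real) set"
  for G where
  gen: "g \<in> G \<Longrightarrow> g \<in> ring_gen G"
| const: "(\<lambda>p. c) \<in> ring_gen G"
| add: "f \<in> ring_gen G \<Longrightarrow> g \<in> ring_gen G \<Longrightarrow> (\<lambda>p. f p + g p) \<in> ring_gen G"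
| mult: "f \<in> ring_gen G \<Longrightarrow> g \<in> ring_gen G \<Longrightarrow> (\<lambda>p. f p * g p) \<in> ring_gen G"

definition deriv_in :: "(real \<times> real) set \<Rightarrow> (real \<times> real \<Rightarrow> real) set \<Rightarrow> (real \<times> real \<Rightarrow> real) \<Rightarrow> bool" where
  "deriv_in S F h \<longleftrightarrow> (\<exists>a\<in>F. \<exists>b\<in>F. \<forall>p\<in>S. (h has_derivative (\<lambda>(u, v). a p * u + b p * v)) (at p))"

lemma hd_eq: "(f has_derivative f') F \<Longrightarrow> (\<And>h. f' h = f'' h) \<Longrightarrow> (f has_derivative f'') F"
proof -
  assume "(f has_derivative f') F" "\<And>h. f' h = f'' h"
  moreover have "f' = f''" using \<open>\<And>h. f' h = f'' h\<close> by auto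
  ultimately show ?thesis by simp
qed

lemma deriv_inI:
  "a \<in> F \<Longrightarrow> b \<in> F \<Longrightarrow> (\<And>p. p \<in> S \<Longrightarrow> (h has_derivative (\<lambda>(u, v). a p * u + b p * v)) (at p)) \<Longrightarrow> deriv_in S F h"
  unfolding deriv_in_def by blast

lemma ring_gen_deriv:
  assumes G: "\<forall>g\<in>G. deriv_in S (ring_gen G) g" and h: "h \<in> ring_gen G"
  shows "deriv_in S (ring_gen G) h"
  using h
proof induction
  case (gen g) then show ?case using G by auto
next
  case (const c)
  have "\<forall>p\<in>S. ((\<lambda>p. c) has_derivative (\<lambda>(u, v). (\<lambda>p. 0) p * u + (\<lambda>p. 0) p * v)) (at p)"
    by (auto intro!: hd_eq[OF has_derivative_const])
  then show ?case unfolding deriv_in_def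
    by (intro bexI[where x="\<lambda>p. 0"]) (auto intro: ring_gen.const)
next
  case (add f g)
  then obtain a1 b1 a2 b2 where ab: "a1 \<in> ring_gen G" "b1 \<in> ring_gen G" "a2 \<in> ring_gen G" "b2 \<in> ring_gen G"
    and d1: "\<forall>p\<in>S. (f has_derivative (\<lambda>(u, v). a1 p * u + b1 p * v)) (at p)"
    and d2: "\<forall>p\<in>S. (g has_derivative (\<lambda>(u, v). a2 p * u + b2 p * v)) (at p)"
    unfolding deriv_in_def by blast
  have "\<forall>p\<in>S. ((\<lambda>p. f p + g p) has_derivative (\<lambda>(u, v). (\<lambda>p. a1 p + a2 p) p * u + (\<lambda>p. b1 p + b2 p) p * v)) (at p)"
  proof
    fix p assume "p \<in> S"
    show "((\<lambda>p. f p + g p) has_derivative (\<lambda>(u, v). (\<lambda>p. a1 p + a2 p) p * u + (\<lambda>p. b1 p + b2 p) p * v)) (at p)"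
      by (rule hd_eq[OF has_derivative_add[OF d1[rule_format, OF \<open>p \<in> S\<close>] d2[rule_format, OF \<open>p \<in> S\<close>]]])
         (auto simp: algebra_simps split: prod.splits)
  qed
  moreover have "(\<lambda>p. a1 p + a2 p) \<in> ring_gen G" "(\<lambda>p. b1 p + b2 p) \<in> ring_gen G"
    using ab by (auto intro: ring_gen.add)
  ultimately show ?case by (intro deriv_inI[where a="\<lambda>p. a1 p + a2 p" and b="\<lambda>p. b1 p + b2 p"]) auto
next
  case (mult f g)
  then obtain a1 b1 a2 b2 where ab: "a1 \<in> ring_gen G" "b1 \<in> ring_gen G" "a2 \<in> ring_gen G" "b2 \<in> ring_gen G"
    and d1: "\<forall>p\<in>S. (f has_derivative (\<lambda>(u, v). a1 p * u + b1 p * v)) (at p)"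
    and d2: "\<forall>p\<in>S. (g has_derivative (\<lambda>(u, v). a2 p * u + b2 p * v)) (at p)"
    unfolding deriv_in_def by blast
  have "\<forall>p\<in>S. ((\<lambda>p. f p * g p) has_derivative (\<lambda>(u, v). (\<lambda>p. f p * a2 p + a1 p * g p) p * u + (\<lambda>p. f p * b2 p + b1 p * g p) p * v)) (at p)"
  proof
    fix p assume "p \<in> S"
    show "((\<lambda>p. f p * g p) has_derivative (\<lambda>(u, v). (\<lambda>p. f p * a2 p + a1 p * g p) p * u + (\<lambda>p. f p * b2 p + b1 p * g p) p * v)) (at p)"
      by (rule hd_eq[OF has_derivative_mult[OF d1[rule_format, OF \<open>p \<in> S\<close>] d2[rule_format, OF \<open>p \<in> S\<close>]]])
         (auto simp: algebra_simps split: prod.splits)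
  qed
  moreover have "(\<lambda>p. f p * a2 p + a1 p * g p) \<in> ring_gen G" "(\<lambda>p. f p * b2 p + b1 p * g p) \<in> ring_gen G"
    using ab mult by (auto intro!: ring_gen.add ring_gen.mult)
  ultimately show ?case by (intro deriv_inI[where a="\<lambda>p. f p * a2 p + a1 p * g p" and b="\<lambda>p. f p * b2 p + b1 p * g p"]) auto
qed

lemma ring_gen_smooth:
  assumes G: "\<forall>g\<in>G. deriv_in S (ring_gen G) g" and h: "h \<in> ring_gen G"
  shows "smooth_on S h"
  unfolding smooth_on_def
proof (rule exI[where x="ring_gen G"], rule conjI, rule_tac [2] ballI)
  show "h \<in> ring_gen G" by fact
  fix k assume k: "k \<in> ring_gen G"
  from ring_gen_deriv[OF G k] obtain a b where ab: "a \<in> ring_gen G" "b \<in> ring_gen G"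
    and d: "\<forall>p\<in>S. (k has_derivative (\<lambda>(u, v). a p * u + b p * v)) (at p)"
    unfolding deriv_in_def by blast
  have "continuous_on S k"
    using d by (intro continuous_at_imp_continuous_on) (auto dest: has_derivative_continuous)
  then show "continuous_on S k \<and> (\<exists>a\<in>ring_gen G. \<exists>b\<in>ring_gen G. \<forall>p\<in>S. (k has_derivative (\<lambda>(u, v). a p * u + b p * v)) (at p))"
    using ab d by blast
qed

definition phi :: "real \<times> real \<Rightarrow> real \<times> real" where
  "phi = (\<lambda>p. (snd p, (fst p + snd p) * exp (- fst p)))"

lemma phi_smooth: "smooth_map_on U phi"
proof -
  define G where "G = {fst, snd, (\<lambda>p::real\<times>real. exp (- fst p))}"
  have fst_in: "fst \<in> ring_gen G" and snd_in: "snd \<in> ring_gen G"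
    and e_in: "(\<lambda>p::real\<times>real. exp (- fst p)) \<in> ring_gen G"
    by (auto simp: G_def intro: ring_gen.gen)
  have c1: "(\<lambda>p. 1) \<in> ring_gen G" and c0: "(\<lambda>p. 0) \<in> ring_gen G" by (rule ring_gen.const)+
  have "\<forall>g\<in>G. deriv_in U (ring_gen G) g"
  proof -
    have "deriv_in U (ring_gen G) fst"
      by (rule deriv_inI[OF c1 c0]) (auto intro!: hd_eq[OF has_derivative_fst[OF has_derivative_ident]])
    moreover have "deriv_in U (ring_gen G) snd"
      by (rule deriv_inI[OF c0 c1]) (auto intro!: hd_eq[OF has_derivative_snd[OF has_derivative_ident]])
    moreover have "deriv_in U (ring_gen G) (\<lambda>p::real\<times>real. exp (- fst p))"
    proof (rule deriv_inI[where a="\<lambda>p. (-1) * exp (- fst p)" and b="\<lambda>p. 0"])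
      show "(\<lambda>p. (-1) * exp (- fst p)) \<in> ring_gen G" by (rule ring_gen.mult[OF ring_gen.const e_in])
      show "(\<lambda>p. 0) \<in> ring_gen G" by (rule c0)
      fix p :: "real \<times> real"
      show "((\<lambda>p. exp (- fst p)) has_derivative (\<lambda>(u, v). (-1) * exp (- fst p) * u + 0 * v)) (at p)"
        by (rule hd_eq, (rule derivative_eq_intros refl)+) (auto split: prod.splits)
    qed
    ultimately show ?thesis by (auto simp: G_def)
  qed
  note R = ring_gen_smooth[OF this]
  have "smooth_on U snd" by (rule R[OF snd_in])
  moreover have "smooth_on U (\<lambda>p::real\<times>real. (fst p + snd p) * exp (- fst p))"
    by (rule R, rule ring_gen.mult[OF ring_gen.add[OF fst_in snd_in] e_in])
  ultimately show ?thesis unfolding smooth_map_on_def phi_def by simp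
qed

lemma phi_deriv:
  "(phi has_derivative (\<lambda>h. (snd h, (1 - fst q - snd q) * exp (- fst q) * fst h + exp (- fst q) * snd h))) (at q)"
  unfolding phi_def
  by (rule hd_eq, (rule derivative_eq_intros refl)+) (auto simp: algebra_simps)

lemma phi_diffeo:
  assumes oU: "open U" and UD: "U \<subseteq> {(x, y). x + y \<noteq> 1}" and inj: "inj_on phi U"
  shows "diffeo_onto_open U phi"
proof -
  have cont: "continuous_on U phi" unfolding phi_def by (intro continuous_intros)
  define V where "V = phi ` U"
  have oV: "open V" unfolding V_def by (rule invariance_of_domain[OF cont oU inj])
  define psi where "psi = inv_into U phi"
  have psi_phi: "\<And>p. p \<in> U \<Longrightarrow> psi (phi p) = p" by (simp add: psi_def inv_into_f_f inj)
  have phi_psi: "\<And>Y. Y \<in> V \<Longrightarrow> phi (psi Y) = Y" by (simp add: psi_def V_def f_inv_into_f)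
  have psiU: "\<And>Y. Y \<in> V \<Longrightarrow> psi Y \<in> U" by (simp add: psi_def V_def inv_into_into)
  have sndpsi: "\<And>Y. Y \<in> V \<Longrightarrow> snd (psi Y) = fst Y"
  proof -
    fix Y assume "Y \<in> V"
    then have "fst (phi (psi Y)) = fst Y" using phi_psi by simp
    then show "snd (psi Y) = fst Y" by (simp add: phi_def)
  qed
  have nz: "\<And>Y. Y \<in> V \<Longrightarrow> 1 - fst (psi Y) - fst Y \<noteq> 0"
  proof -
    fix Y assume Y: "Y \<in> V"
    have "psi Y \<in> {(x, y). x + y \<noteq> 1}" using UD psiU[OF Y] by (rule subsetD)
    then have "fst (psi Y) + snd (psi Y) \<noteq> 1" by (simp add: case_prod_beta)
    then show "1 - fst (psi Y) - fst Y \<noteq> 0" using sndpsi[OF Y] by simp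
  qed
  have dpsi: "\<And>Y. Y \<in> V \<Longrightarrow> (psi has_derivative
      (\<lambda>h. ((snd h * exp (fst (psi Y)) - fst h) / (1 - fst (psi Y) - fst Y), fst h))) (at Y)"
  proof -
    fix Y assume Y: "Y \<in> V"
    let ?q = "psi Y"
    have "(psi has_derivative
      (\<lambda>h. ((snd h * exp (fst (psi Y)) - fst h) / (1 - fst (psi Y) - fst Y), fst h))) (at (phi ?q))"
    proof (rule has_derivative_inverse_strong[OF oU psiU[OF Y] cont psi_phi phi_deriv])
      show "(\<lambda>h. (snd h, (1 - fst ?q - snd ?q) * exp (- fst ?q) * fst h + exp (- fst ?q) * snd h)) \<circ>
          (\<lambda>h. ((snd h * exp (fst (psi Y)) - fst h) / (1 - fst (psi Y) - fst Y), fst h)) = id"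
      proof
        fix h :: "real \<times> real"
        obtain s t where h: "h = (s, t)" by fastforce
        have d: "1 - fst ?q - fst Y \<noteq> 0" using nz[OF Y] .
        have e: "exp (- fst ?q) * exp (fst ?q) = 1" by (simp add: exp_minus_inverse mult.commute)
        have "(1 - fst ?q - fst Y) * exp (- fst ?q) * ((t * exp (fst ?q) - s) / (1 - fst ?q - fst Y))
              = exp (- fst ?q) * (t * exp (fst ?q) - s)" using d by simp
        also have "\<dots> = t - exp (- fst ?q) * s" using e by (simp add: algebra_simps)
        finally show "((\<lambda>h. (snd h, (1 - fst ?q - snd ?q) * exp (- fst ?q) * fst h + exp (- fst ?q) * snd h)) \<circ>
          (\<lambda>h. ((snd h * exp (fst (psi Y)) - fst h) / (1 - fst (psi Y) - fst Y), fst h))) h = id h"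
          using sndpsi[OF Y] h by simp
      qed
    qed
    then show "(psi has_derivative
      (\<lambda>h. ((snd h * exp (fst (psi Y)) - fst h) / (1 - fst (psi Y) - fst Y), fst h))) (at Y)"
      using phi_psi[OF Y] by simp
  qed
  define X where "X = (\<lambda>Y. fst (psi Y))"
  define P where "P = (\<lambda>Y. snd (psi Y))"
  define E where "E = (\<lambda>Y. exp (X Y))"
  define w where "w = (\<lambda>Y. inverse (1 - X Y - fst Y))"
  define G where "G = {X, P, E, w}"
  have Xg: "X \<in> ring_gen G" and Pg: "P \<in> ring_gen G" and Eg: "E \<in> ring_gen G" and wg: "w \<in> ring_gen G"
    by (auto simp: G_def intro: ring_gen.gen)
  note cst = ring_gen.const and rm = ring_gen.mult and ra = ring_gen.add
  have dX: "(X has_derivative (\<lambda>(s, t). (-1) * w Y * s + E Y * w Y * t)) (at Y)" if Y: "Y \<in> V" for Y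
  proof -
    have "((\<lambda>Y. fst (psi Y)) has_derivative
      (\<lambda>h. fst ((\<lambda>h. ((snd h * exp (fst (psi Y)) - fst h) / (1 - fst (psi Y) - fst Y), fst h)) h))) (at Y)"
      by (rule has_derivative_fst[OF dpsi[OF Y]])
    then show ?thesis unfolding X_def
    proof (rule hd_eq)
      fix h :: "real \<times> real"
      show "fst ((\<lambda>h. ((snd h * exp (fst (psi Y)) - fst h) / (1 - fst (psi Y) - fst Y), fst h)) h) =
         (case h of (s, t) \<Rightarrow> (-1) * w Y * s + E Y * w Y * t)"
        by (auto simp: w_def E_def X_def divide_inverse algebra_simps split: prod.splits)
    qed
  qed
  have dP: "(P has_derivative (\<lambda>(s, t). 1 * s + 0 * t)) (at Y)" if Y: "Y \<in> V" for Y
  proof -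
    have "((\<lambda>Y. snd (psi Y)) has_derivative
      (\<lambda>h. snd ((\<lambda>h. ((snd h * exp (fst (psi Y)) - fst h) / (1 - fst (psi Y) - fst Y), fst h)) h))) (at Y)"
      by (rule has_derivative_snd[OF dpsi[OF Y]])
    then show ?thesis unfolding P_def
      by (rule hd_eq) (auto split: prod.splits)
  qed
  have dE: "(E has_derivative (\<lambda>(s, t). E Y * ((-1) * w Y) * s + E Y * (E Y * w Y) * t)) (at Y)" if Y: "Y \<in> V" for Y
  proof -
    have "((\<lambda>Y. exp (X Y)) has_derivative (\<lambda>h. (\<lambda>(s, t). (-1) * w Y * s + E Y * w Y * t) h * exp (X Y))) (at Y)"
      by (rule DERIV_compose_FDERIV[OF DERIV_exp dX[OF Y]])
    then show ?thesis unfolding E_def[symmetric]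
      by (rule hd_eq) (auto simp: E_def algebra_simps split: prod.splits)
  qed
  have dw: "(w has_derivative (\<lambda>(s, t). (w Y * w Y) * (1 + (-1) * w Y) * s + (w Y * w Y) * (E Y * w Y) * t)) (at Y)"
    if Y: "Y \<in> V" for Y
  proof -
    have dk: "((\<lambda>Y. 1 - X Y - fst Y) has_derivative
       (\<lambda>h. 0 - (\<lambda>(s, t). (-1) * w Y * s + E Y * w Y * t) h - fst h)) (at Y)"
      by (intro has_derivative_diff has_derivative_const dX[OF Y] has_derivative_fst[OF has_derivative_ident])
    have nzY: "1 - X Y - fst Y \<noteq> 0" using nz[OF Y] by (simp add: X_def)
    have wY: "inverse (1 - X Y - fst Y) = w Y" by (simp add: w_def)
    from Deriv.has_derivative_inverse[OF nzY dk, unfolded wY]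
    show ?thesis unfolding w_def[symmetric]
      by (rule hd_eq) (auto simp: algebra_simps split: prod.splits)
  qed
  have "\<forall>g\<in>G. deriv_in V (ring_gen G) g"
  proof -
    have "deriv_in V (ring_gen G) X"
      by (rule deriv_inI[OF rm[OF cst wg] rm[OF Eg wg] dX])
    moreover have "deriv_in V (ring_gen G) P"
      by (rule deriv_inI[OF cst cst dP])
    moreover have "deriv_in V (ring_gen G) E"
      by (rule deriv_inI[OF rm[OF Eg rm[OF cst wg]] rm[OF Eg rm[OF Eg wg]] dE])
    moreover have "deriv_in V (ring_gen G) w"
      by (rule deriv_inI[OF rm[OF rm[OF wg wg] ra[OF cst rm[OF cst wg]]] rm[OF rm[OF wg wg] rm[OF Eg wg]] dw])
    ultimately show ?thesis by (auto simp: G_def)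
  qed
  note R = ring_gen_smooth[OF this]
  have "smooth_map_on V psi"
    unfolding smooth_map_on_def using R[OF Xg] R[OF Pg] by (simp add: X_def P_def)
  then show ?thesis
    unfolding diffeo_onto_open_def using oU oV inj phi_smooth psi_phi V_def by blast
qed

lemma g_strict:
  fixes a b y :: real
  assumes ab: "a < b" and side: "(a + y < 1 \<and> b + y < 1) \<or> (a + y > 1 \<and> b + y > 1)"
  shows "(b + y) * exp (- b) \<noteq> (a + y) * exp (- a)"
proof -
  have "\<exists>z. a < z \<and> z < b \<and> (b + y) * exp (- b) - (a + y) * exp (- a) = (b - a) * ((1 - z - y) * exp (- z))"
    by (rule MVT2[OF ab]) (auto intro!: derivative_eq_intros simp: algebra_simps)
  then obtain z where z: "a < z" "z < b"
    and eq: "(b + y) * exp (- b) - (a + y) * exp (- a) = (b - a) * ((1 - z - y) * exp (- z))" by blast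
  have "1 - z - y \<noteq> 0" using side z by auto
  then have "(b - a) * ((1 - z - y) * exp (- z)) \<noteq> 0" using ab by simp
  then have "(b + y) * exp (- b) - (a + y) * exp (- a) \<noteq> 0" unfolding eq .
  then show ?thesis by simp
qed

lemma phi_inj:
  assumes side: "\<forall>p\<in>U. \<forall>q\<in>U. (fst p + snd p < 1 \<and> fst q + snd q < 1) \<or> (fst p + snd p > 1 \<and> fst q + snd q > 1)"
  shows "inj_on phi U"
proof (rule inj_onI)
  fix p q assume p: "p \<in> U" and q: "q \<in> U" and eq: "phi p = phi q"
  then have y: "snd p = snd q" and e: "(fst p + snd p) * exp (- fst p) = (fst q + snd q) * exp (- fst q)"
    by (auto simp: phi_def)
  have sd: "(fst p + snd p < 1 \<and> fst q + snd q < 1) \<or> (fst p + snd p > 1 \<and> fst q + snd q > 1)"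
    using side p q by blast
  show "p = q"
  proof (rule ccontr)
    assume "p \<noteq> q"
    then have "fst p \<noteq> fst q" using y by (simp add: prod_eq_iff)
    then consider "fst p < fst q" | "fst q < fst p" by linarith
    then show False
    proof cases
      case 1
      have "(fst q + snd p) * exp (- fst q) \<noteq> (fst p + snd p) * exp (- fst p)"
        by (rule g_strict[OF 1]) (use sd y in auto)
      then show False using e y by simp
    next
      case 2
      have "(fst p + snd p) * exp (- fst p) \<noteq> (fst q + snd p) * exp (- fst q)"
        by (rule g_strict[OF 2]) (use sd y in auto)
      then show False using e y by simp
    qed
  qed
qed

lemma leaf_line:
  assumes "\<And>r. r \<in> U \<Longrightarrow> g r = g q \<Longrightarrow> \<exists>t. phi r = a + t *\<^sub>R v"
  shows "phi ` local_leaf U g q \<subseteq> line a v"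
proof
  fix z assume "z \<in> phi ` local_leaf U g q"
  then obtain r where r: "r \<in> local_leaf U g q" and z: "z = phi r" by blast
  have "r \<in> {r \<in> U. g r = g q}" using r connected_component_subset unfolding local_leaf_def by blast
  then obtain t where "phi r = a + t *\<^sub>R v" using assms by blast
  then show "z \<in> line a v" using z by (auto simp: line_def)
qed

lemma leaves:
  "\<forall>g\<in>{(\<lambda>(x, y). x), (\<lambda>(x, y). y), (\<lambda>(x, y). (x + y) * exp (- x))}. \<forall>q\<in>U.
     \<exists>a v. v \<noteq> 0 \<and> phi ` local_leaf U g q \<subseteq> line a v"
proof -
  have L1: "\<exists>a v. v \<noteq> 0 \<and> phi ` local_leaf U (\<lambda>(x, y). x) q \<subseteq> line a v" for q :: "real \<times> real"
  proof (intro exI conjI)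
    show "(1::real, exp (- fst q)) \<noteq> 0" by (simp add: zero_prod_def)
    show "phi ` local_leaf U (\<lambda>(x, y). x) q \<subseteq> line (0, fst q * exp (- fst q)) (1, exp (- fst q))"
    proof (rule leaf_line)
      fix r :: "real \<times> real" assume "(\<lambda>(x, y). x) r = (\<lambda>(x, y). x) q"
      then have "fst r = fst q" by (simp add: case_prod_beta)
      then show "\<exists>t. phi r = (0, fst q * exp (- fst q)) + t *\<^sub>R (1, exp (- fst q))"
        by (intro exI[of _ "snd r"]) (simp add: phi_def algebra_simps)
    qed
  qed
  have L2: "\<exists>a v. v \<noteq> 0 \<and> phi ` local_leaf U (\<lambda>(x, y). y) q \<subseteq> line a v" for q :: "real \<times> real"
  proof (intro exI conjI)
    show "(0::real, 1::real) \<noteq> 0" by (simp add: zero_prod_def)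
    show "phi ` local_leaf U (\<lambda>(x, y). y) q \<subseteq> line (snd q, 0) (0, 1)"
    proof (rule leaf_line)
      fix r :: "real \<times> real" assume "(\<lambda>(x, y). y) r = (\<lambda>(x, y). y) q"
      then have "snd r = snd q" by (simp add: case_prod_beta)
      then show "\<exists>t. phi r = (snd q, 0) + t *\<^sub>R (0, 1)"
        by (intro exI[of _ "(fst r + snd r) * exp (- fst r)"]) (simp add: phi_def)
    qed
  qed
  have L3: "\<exists>a v. v \<noteq> 0 \<and> phi ` local_leaf U (\<lambda>(x, y). (x + y) * exp (- x)) q \<subseteq> line a v"
    for q :: "real \<times> real"
  proof (intro exI conjI)
    show "(1::real, 0::real) \<noteq> 0" by (simp add: zero_prod_def)
    show "phi ` local_leaf U (\<lambda>(x, y). (x + y) * exp (- x)) q \<subseteq> line (0, (fst q + snd q) * exp (- fst q)) (1, 0)"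
    proof (rule leaf_line)
      fix r :: "real \<times> real" assume "(\<lambda>(x, y). (x + y) * exp (- x)) r = (\<lambda>(x, y). (x + y) * exp (- x)) q"
      then have "(fst r + snd r) * exp (- fst r) = (fst q + snd q) * exp (- fst q)" by (simp add: case_prod_beta)
      then show "\<exists>t. phi r = (0, (fst q + snd q) * exp (- fst q)) + t *\<^sub>R (1, 0)"
        by (intro exI[of _ "snd r"]) (simp add: phi_def)
    qed
  qed
  show ?thesis using L1 L2 L3 by blast
qed

theorem mainTheorem1:
  shows "linearizable_web {(x, y). x + y \<noteq> 1} (\<lambda>(x, y). x) (\<lambda>(x, y). y)
           (\<lambda>(x, y). (x + y) * exp (- x))"
  unfolding linearizable_web_def
proof
  fix p :: "real \<times> real" assume p: "p \<in> {(x, y). x + y \<noteq> 1}"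
  then have p1: "fst p + snd p \<noteq> 1" by (simp add: case_prod_beta)
  obtain U where U: "p \<in> U" "open U" "U \<subseteq> {(x, y). x + y \<noteq> 1}" "inj_on phi U"
  proof (cases "fst p + snd p < 1")
    case True
    let ?U = "{q :: real \<times> real. fst q + snd q < 1}"
    have "open ?U" by (intro open_Collect_less continuous_intros)
    moreover have "?U \<subseteq> {(x, y). x + y \<noteq> 1}" by auto
    moreover have "inj_on phi ?U" by (rule phi_inj) auto
    ultimately show ?thesis using that[of ?U] True by blast
  next
    case False
    then have T: "fst p + snd p > 1" using p1 by linarith
    let ?U = "{q :: real \<times> real. 1 < fst q + snd q}"
    have "open ?U" by (intro open_Collect_less continuous_intros)
    moreover have "?U \<subseteq> {(x, y). x + y \<noteq> 1}" by auto
    moreover have "inj_on phi ?U" by (rule phi_inj) auto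
    ultimately show ?thesis using that[of ?U] T by blast
  qed
  have "diffeo_onto_open U phi" by (rule phi_diffeo[OF U(2) U(3) U(4)])
  then show "\<exists>U \<phi>. p \<in> U \<and> U \<subseteq> {(x, y). x + y \<noteq> 1} \<and> diffeo_onto_open U \<phi> \<and>
        (\<forall>g\<in>{(\<lambda>(x, y). x), (\<lambda>(x, y). y), (\<lambda>(x, y). (x + y) * exp (- x))}. \<forall>q\<in>U.
           \<exists>a v. v \<noteq> 0 \<and> \<phi> ` local_leaf U g q \<subseteq> line a v)"
    using U(1) U(3) leaves[of U] by blast
qed

end
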